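(* Let $G$ be a connected (claw, bull)-free graph with $\ell(G)\le 3$ and $\alpha(G)\ge 3$. Then: (1) $\mathrm{diam}(G)\ge 4$; and (2) $G$ is an expansion of a path.
   Context: A claw is a graph isomorphic to $K_{1,3}$; a bull is the graph obtained from a triangle by adding two pendant edges at two different vertices. A graph is (claw, bull)-free if it has no induced claw and no induced bull. $\ell(G)$ is the length of a longest induced cycle in $G$; $\ell(G)\le 3$ means $G$ has no induced cycle of length at least $4$. $\alpha(G)$ is the independence number and $\mathrm{diam}(G)$ the diameter. An expansion of a graph $F$ with vertex set $\{v_1,\dots,v_n\}$ is any graph obtained from $F$ by replacing each vertex $v_i$ by a nonempty clique $K^{[i]}$, the cliques being pairwise vertex-disjoint, and adding all edges between $V(K^{[i]})$ and $V(K^{[j]})$ whenever $v_iv_j\in E(F)$ (and no other edges between different cliques). *)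

theory Defs
  imports Main
begin

definition graph :: "'a set \<Rightarrow> ('a \<Rightarrow> 'a \<Rightarrow> bool) \<Rightarrow> bool" where
  "graph V E \<longleftrightarrow> finite V \<and> (\<forall>x\<in>V. \<forall>y\<in>V. E x y \<longleftrightarrow> E y x) \<and> (\<forall>x\<in>V. \<not> E x x)"

definition has_induced :: "'a set \<Rightarrow> ('a \<Rightarrow> 'a \<Rightarrow> bool) \<Rightarrow> 'b set \<Rightarrow> ('b \<Rightarrow> 'b \<Rightarrow> bool) \<Rightarrow> bool" where
  "has_induced V E HV HE \<longleftrightarrow>
     (\<exists>f. inj_on f HV \<and> f ` HV \<subseteq> V \<and> (\<forall>a\<in>HV. \<forall>b\<in>HV. E (f a) (f b) \<longleftrightarrow> HE a b))"

definition claw_E :: "nat \<Rightarrow> nat \<Rightarrow> bool" where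
  "claw_E a b \<longleftrightarrow> (a = 0 \<and> b \<in> {1,2,3}) \<or> (b = 0 \<and> a \<in> {1,2,3})"

definition bull_E :: "nat \<Rightarrow> nat \<Rightarrow> bool" where
  "bull_E a b \<longleftrightarrow> {a, b} \<in> {{0,1},{1,2},{0,2},{0,3},{1,4}}"

definition claw_free :: "'a set \<Rightarrow> ('a \<Rightarrow> 'a \<Rightarrow> bool) \<Rightarrow> bool" where
  "claw_free V E \<longleftrightarrow> \<not> has_induced V E {0..<4} claw_E"

definition bull_free :: "'a set \<Rightarrow> ('a \<Rightarrow> 'a \<Rightarrow> bool) \<Rightarrow> bool" where
  "bull_free V E \<longleftrightarrow> \<not> has_induced V E {0..<5} bull_E"

definition cycle_E :: "nat \<Rightarrow> nat \<Rightarrow> nat \<Rightarrow> bool" where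
  "cycle_E k a b \<longleftrightarrow> a \<noteq> b \<and> ((a + 1) mod k = b \<or> (b + 1) mod k = a)"

definition longest_induced_cycle_le3 :: "'a set \<Rightarrow> ('a \<Rightarrow> 'a \<Rightarrow> bool) \<Rightarrow> bool" where
  "longest_induced_cycle_le3 V E \<longleftrightarrow> (\<forall>k\<ge>4. \<not> has_induced V E {0..<k} (cycle_E k))"

definition independent :: "'a set \<Rightarrow> ('a \<Rightarrow> 'a \<Rightarrow> bool) \<Rightarrow> 'a set \<Rightarrow> bool" where
  "independent V E S \<longleftrightarrow> S \<subseteq> V \<and> (\<forall>x\<in>S. \<forall>y\<in>S. \<not> E x y)"

definition independence_number :: "'a set \<Rightarrow> ('a \<Rightarrow> 'a \<Rightarrow> bool) \<Rightarrow> nat" where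
  "independence_number V E = Max {card S | S. independent V E S}"

definition walk :: "'a set \<Rightarrow> ('a \<Rightarrow> 'a \<Rightarrow> bool) \<Rightarrow> 'a list \<Rightarrow> bool" where
  "walk V E xs \<longleftrightarrow> xs \<noteq> [] \<and> set xs \<subseteq> V \<and> (\<forall>i. Suc i < length xs \<longrightarrow> E (xs ! i) (xs ! Suc i))"

definition connected_graph :: "'a set \<Rightarrow> ('a \<Rightarrow> 'a \<Rightarrow> bool) \<Rightarrow> bool" where
  "connected_graph V E \<longleftrightarrow> V \<noteq> {} \<and>
     (\<forall>u\<in>V. \<forall>v\<in>V. \<exists>xs. walk V E xs \<and> hd xs = u \<and> last xs = v)"

definition dist :: "'a set \<Rightarrow> ('a \<Rightarrow> 'a \<Rightarrow> bool) \<Rightarrow> 'a \<Rightarrow> 'a \<Rightarrow> nat" where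
  "dist V E u v = (LEAST n. \<exists>xs. walk V E xs \<and> hd xs = u \<and> last xs = v \<and> length xs = Suc n)"

definition diam :: "'a set \<Rightarrow> ('a \<Rightarrow> 'a \<Rightarrow> bool) \<Rightarrow> nat" where
  "diam V E = Max {dist V E u v | u v. u \<in> V \<and> v \<in> V}"

definition expansion_of :: "'a set \<Rightarrow> ('a \<Rightarrow> 'a \<Rightarrow> bool) \<Rightarrow> nat \<Rightarrow> (nat \<Rightarrow> nat \<Rightarrow> bool) \<Rightarrow> bool" where
  "expansion_of V E n FE \<longleftrightarrow> (\<exists>K :: nat \<Rightarrow> 'a set.
     (\<forall>i<n. K i \<noteq> {}) \<and>
     (\<forall>i<n. \<forall>j<n. i \<noteq> j \<longrightarrow> K i \<inter> K j = {}) \<and>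
     (\<Union>i<n. K i) = V \<and>
     (\<forall>i<n. \<forall>x\<in>K i. \<forall>y\<in>K i. x \<noteq> y \<longrightarrow> E x y) \<and>
     (\<forall>i<n. \<forall>j<n. i \<noteq> j \<longrightarrow> (\<forall>x\<in>K i. \<forall>y\<in>K j. E x y \<longleftrightarrow> FE i j)))"

definition path_E :: "nat \<Rightarrow> nat \<Rightarrow> bool" where
  "path_E i j \<longleftrightarrow> i + 1 = j \<or> j + 1 = i"

definition expansion_of_path :: "'a set \<Rightarrow> ('a \<Rightarrow> 'a \<Rightarrow> bool) \<Rightarrow> bool" where
  "expansion_of_path V E \<longleftrightarrow> (\<exists>n\<ge>1. expansion_of V E n path_E)"

end

theory Submission
  imports Defs
begin


locale gr =
  fixes V :: "'a set" and E :: "'a \<Rightarrow> 'a \<Rightarrow> bool"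
  assumes G: "graph V E" and CF: "claw_free V E" and BF: "bull_free V E"
    and HF: "longest_induced_cycle_le3 V E"
begin

lemma sym: "x \<in> V \<Longrightarrow> y \<in> V \<Longrightarrow> E x y \<Longrightarrow> E y x"
  using G unfolding graph_def by blast

lemma irr: "x \<in> V \<Longrightarrow> \<not> E x x"
  using G unfolding graph_def by blast

lemma finV: "finite V"
  using G unfolding graph_def by blast

lemma claw:
  assumes "c\<in>V" "x\<in>V" "y\<in>V" "z\<in>V" "E c x" "E c y" "E c z"
    "\<not>E x y" "\<not>E x z" "\<not>E y z" "x\<noteq>y" "x\<noteq>z" "y\<noteq>z"
  shows False
proof -
  let ?f = "\<lambda>i::nat. if i=0 then c else if i=1 then x else if i=2 then y else z"
  have d: "c\<noteq>x" "c\<noteq>y" "c\<noteq>z" using assms irr by metis+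
  have s: "E x c" "E y c" "E z c" "\<not>E y x" "\<not>E z x" "\<not>E z y"
    using assms sym by blast+
  have i: "\<not> E c c" "\<not> E x x" "\<not> E y y" "\<not> E z z" using assms irr by auto
  have U: "{0..<4::nat} = {0,1,2,3}" by auto
  have "has_induced V E {0..<4} claw_E"
    unfolding has_induced_def
  proof (intro exI[of _ ?f] conjI)
    show "inj_on ?f {0..<4}" unfolding U inj_on_def using d assms(11-13) by auto
    show "?f ` {0..<4} \<subseteq> V" unfolding U using assms(1-4) by auto
    show "\<forall>a\<in>{0..<4}. \<forall>b\<in>{0..<4}. E (?f a) (?f b) = claw_E a b"
      unfolding U using assms s i by (auto simp: claw_E_def)
  qed
  with CF show False unfolding claw_free_def by simp
qed

lemma bull:
  assumes "a\<in>V" "b\<in>V" "c\<in>V" "d\<in>V" "e\<in>V"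
    "E a b" "E b c" "E a c" "E a d" "E b e"
    "\<not>E d b" "\<not>E d c" "\<not>E e a" "\<not>E e c" "\<not>E d e"
  shows False
proof -
  let ?f = "\<lambda>i::nat. if i=0 then a else if i=1 then b else if i=2 then c else if i=3 then d else e"
  have s: "E b a" "E c b" "E c a" "E d a" "E e b" "\<not>E b d" "\<not>E c d" "\<not>E a e" "\<not>E c e" "\<not>E e d"
    using assms sym by blast+
  have i: "\<not> E a a" "\<not> E b b" "\<not> E c c" "\<not> E d d" "\<not> E e e" using assms irr by auto
  have d: "a\<noteq>b" "a\<noteq>c" "a\<noteq>d" "a\<noteq>e" "b\<noteq>c" "b\<noteq>d" "b\<noteq>e" "c\<noteq>d" "c\<noteq>e" "d\<noteq>e"
    using assms s i by metis+
  have U: "{0..<5::nat} = {0,1,2,3,4}" by auto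
  have "has_induced V E {0..<5} bull_E"
    unfolding has_induced_def
  proof (intro exI[of _ ?f] conjI)
    show "inj_on ?f {0..<5}" unfolding U inj_on_def using d by auto
    show "?f ` {0..<5} \<subseteq> V" unfolding U using assms(1-5) by auto
    show "\<forall>x\<in>{0..<5}. \<forall>y\<in>{0..<5}. E (?f x) (?f y) = bull_E x y"
      unfolding U using assms s i by (auto simp: bull_E_def doubleton_eq_iff)
  qed
  with BF show False unfolding bull_free_def by simp
qed

lemma hole:
  assumes "4 \<le> L" "\<forall>i<L. q i \<in> V" "inj_on q {..<L}"
    "\<forall>i<L. \<forall>j<L. E (q i) (q j) \<longleftrightarrow> cycle_E L i j"
  shows False
proof -
  have "has_induced V E {0..<L} (cycle_E L)"
    unfolding has_induced_def using assms by (intro exI[of _ q]) (auto simp: atLeast0LessThan)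
  with HF assms(1) show False unfolding longest_induced_cycle_le3_def by blast
qed

lemma C4:
  assumes "a\<in>V" "b\<in>V" "c\<in>V" "d\<in>V" "E a b" "E b c" "E c d" "E d a" "\<not>E a c" "\<not>E b d"
    "a\<noteq>c" "b\<noteq>d"
  shows False
proof -
  let ?f = "\<lambda>i::nat. if i=0 then a else if i=1 then b else if i=2 then c else d"
  have s: "E b a" "E c b" "E d c" "E a d" "\<not>E c a" "\<not>E d b"
    using assms sym by blast+
  have i: "\<not> E a a" "\<not> E b b" "\<not> E c c" "\<not> E d d" using assms irr by auto
  have d: "a\<noteq>b" "a\<noteq>d" "b\<noteq>c" "c\<noteq>d" using assms i by metis+
  have U: "{..<4::nat} = {0,1,2,3}" by auto
  show False
  proof (rule hole[of 4 ?f])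
    show "inj_on ?f {..<4}" unfolding U inj_on_def using d assms(11,12) by auto
    show "\<forall>i<4. ?f i \<in> V" using assms(1-4) by auto
    have "\<forall>i\<in>{..<4}. \<forall>j\<in>{..<4}. E (?f i) (?f j) = cycle_E 4 i j"
      unfolding U using assms s i by (auto simp: cycle_E_def)
    then show "\<forall>i<4. \<forall>j<4. E (?f i) (?f j) = cycle_E 4 i j" by auto
  qed simp
qed

end


definition ipath :: "'a set \<Rightarrow> ('a \<Rightarrow> 'a \<Rightarrow> bool) \<Rightarrow> (nat \<Rightarrow> 'a) \<Rightarrow> nat \<Rightarrow> bool" where
  "ipath V E p m \<longleftrightarrow> (\<forall>i<m. p i \<in> V) \<and> inj_on p {..<m} \<and>
     (\<forall>i<m. \<forall>j<m. E (p i) (p j) \<longleftrightarrow> path_E i j)"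

lemma cycle_E_iff:
  assumes "i < L" "j < L" "3 \<le> L"
  shows "cycle_E L i j \<longleftrightarrow> (i+1=j \<or> j+1=i \<or> (i=0 \<and> j=L-1) \<or> (j=0 \<and> i=L-1))"
proof -
  have a: "(i+1) mod L = (if i+1 = L then 0 else i+1)" using assms by auto
  have b: "(j+1) mod L = (if j+1 = L then 0 else j+1)" using assms by auto
  show ?thesis unfolding cycle_E_def a b using assms by auto
qed

lemma ipath_shift:
  assumes "ipath V E p m" "a + n \<le> m"
  shows "ipath V E (\<lambda>t. p (a+t)) n"
proof -
  have "\<forall>i<m. p i \<in> V" "inj_on p {..<m}" "\<forall>i<m. \<forall>j<m. E (p i) (p j) \<longleftrightarrow> path_E i j"
    using assms(1) unfolding ipath_def by auto
  moreover have "inj_on (\<lambda>t. p (a+t)) {..<n}"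
  proof (rule inj_onI)
    fix x y assume "x \<in> {..<n}" "y \<in> {..<n}" "p (a+x) = p (a+y)"
    then have "a + x = a + y" using \<open>inj_on p {..<m}\<close> assms(2) unfolding inj_on_def
      by (metis add_less_cancel_left lessThan_iff order_less_le_trans)
    then show "x = y" by simp
  qed
  ultimately show ?thesis using assms(2) unfolding ipath_def path_E_def by auto
qed

context gr begin

lemma ipath_cons:
  assumes "ipath V E q n" "z \<in> V" "z \<notin> q ` {..<n}" "\<forall>k<n. E z (q k) \<longleftrightarrow> k = 0"
  shows "ipath V E (\<lambda>t. if t = 0 then z else q (t-1)) (Suc n)"
proof -
  have qV: "\<forall>i<n. q i \<in> V" and qi: "inj_on q {..<n}" and qE: "\<forall>i<n. \<forall>j<n. E (q i) (q j) \<longleftrightarrow> path_E i j"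
    using assms(1) unfolding ipath_def by auto
  have zE: "\<forall>k<n. E (q k) z \<longleftrightarrow> k = 0" using assms(4) qV assms(2) sym by blast
  show ?thesis unfolding ipath_def
  proof (intro conjI allI impI)
    fix i assume "i < Suc n" then show "(if i = 0 then z else q (i-1)) \<in> V" using qV assms(2) by auto
  next
    show "inj_on (\<lambda>t. if t = 0 then z else q (t-1)) {..<Suc n}"
      unfolding inj_on_def
    proof (intro ballI impI)
      fix x y assume x: "x \<in> {..<Suc n}" and y: "y \<in> {..<Suc n}"
        and e: "(if x = 0 then z else q (x-1)) = (if y = 0 then z else q (y-1))"
      show "x = y"
      proof (cases "x = 0"; cases "y = 0")
        assume "x \<noteq> 0" "y \<noteq> 0" then show ?thesis using e x y qi unfolding inj_on_def
          by (metis One_nat_def Suc_pred lessThan_iff less_Suc_eq_0_disj not_less_eq)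
      qed (use e x y assms(3) in auto)
    qed
  next
    fix i j assume i: "i < Suc n" and j: "j < Suc n"
    show "E (if i = 0 then z else q (i-1)) (if j = 0 then z else q (j-1)) \<longleftrightarrow> path_E i j"
    proof (cases "i = 0"; cases "j = 0")
      assume "i = 0" "j = 0" then show ?thesis using irr assms(2) by (simp add: path_E_def)
    next
      assume "i = 0" "j \<noteq> 0" then show ?thesis using assms(4) j by (auto simp: path_E_def)
    next
      assume "i \<noteq> 0" "j = 0" then show ?thesis using zE i by (auto simp: path_E_def)
    next
      assume "i \<noteq> 0" "j \<noteq> 0" then show ?thesis using qE i j by (auto simp: path_E_def)
    qed
  qed
qed

lemma ipath_snoc:
  assumes "ipath V E q n" "z \<in> V" "z \<notin> q ` {..<n}" "\<forall>k<n. E z (q k) \<longleftrightarrow> Suc k = n"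
  shows "ipath V E (q(n:=z)) (Suc n)"
proof -
  have qV: "\<forall>i<n. q i \<in> V" and qi: "inj_on q {..<n}" and qE: "\<forall>i<n. \<forall>j<n. E (q i) (q j) \<longleftrightarrow> path_E i j"
    using assms(1) unfolding ipath_def by auto
  have zE: "\<forall>k<n. E (q k) z \<longleftrightarrow> Suc k = n" using assms(4) qV assms(2) sym by blast
  show ?thesis unfolding ipath_def
  proof (intro conjI allI impI)
    fix i assume "i < Suc n" then show "(q(n:=z)) i \<in> V" using qV assms(2) by auto
  next
    show "inj_on (q(n:=z)) {..<Suc n}"
      unfolding inj_on_def
    proof (intro ballI impI)
      fix x y assume x: "x \<in> {..<Suc n}" and y: "y \<in> {..<Suc n}"
        and e: "(q(n:=z)) x = (q(n:=z)) y"
      show "x = y"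
      proof (cases "x = n"; cases "y = n")
        assume "x \<noteq> n" "y \<noteq> n" then show ?thesis using e x y qi unfolding inj_on_def
          by auto
      qed (use e x y assms(3) in auto)
    qed
  next
    fix i j assume i: "i < Suc n" and j: "j < Suc n"
    show "E ((q(n:=z)) i) ((q(n:=z)) j) \<longleftrightarrow> path_E i j"
    proof (cases "i = n"; cases "j = n")
      assume "i = n" "j = n" then show ?thesis using irr assms(2) by (simp add: path_E_def)
    next
      assume "i = n" "j \<noteq> n" then show ?thesis using assms(4) j by (auto simp: path_E_def)
    next
      assume "i \<noteq> n" "j = n" then show ?thesis using zE i by (auto simp: path_E_def)
    next
      assume "i \<noteq> n" "j \<noteq> n" then show ?thesis using qE i j by (auto simp: path_E_def)
    qed
  qed
qed

lemma hole_from_path: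
  assumes "ipath V E r n" "3 \<le> n" "z \<in> V" "z \<notin> r ` {..<n}"
    "\<forall>k<n. E z (r k) \<longleftrightarrow> (k = 0 \<or> Suc k = n)"
  shows False
proof -
  have rV: "\<forall>i<n. r i \<in> V" and ri: "inj_on r {..<n}" and rE: "\<forall>i<n. \<forall>j<n. E (r i) (r j) \<longleftrightarrow> path_E i j"
    using assms(1) unfolding ipath_def by auto
  have zE: "\<forall>k<n. E (r k) z \<longleftrightarrow> (k = 0 \<or> Suc k = n)" using assms(5) rV assms(3) sym by blast
  let ?q = "\<lambda>t. if t = 0 then z else r (t-1)"
  show False
  proof (rule hole[of "Suc n" ?q])
    show "4 \<le> Suc n" using assms(2) by simp
    show "\<forall>i<Suc n. ?q i \<in> V" using rV assms(3) by auto
    show "inj_on ?q {..<Suc n}"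
      unfolding inj_on_def
    proof (intro ballI impI)
      fix x y assume x: "x \<in> {..<Suc n}" and y: "y \<in> {..<Suc n}"
        and e: "?q x = ?q y"
      show "x = y"
      proof (cases "x = 0"; cases "y = 0")
        assume "x \<noteq> 0" "y \<noteq> 0" then show ?thesis using e x y ri unfolding inj_on_def
          by (metis One_nat_def Suc_pred lessThan_iff less_Suc_eq_0_disj not_less_eq)
      qed (use e x y assms(4) in auto)
    qed
    show "\<forall>i<Suc n. \<forall>j<Suc n. E (?q i) (?q j) \<longleftrightarrow> cycle_E (Suc n) i j"
    proof (intro allI impI)
      fix i j assume i: "i < Suc n" and j: "j < Suc n"
      have c: "cycle_E (Suc n) i j \<longleftrightarrow> (i+1=j \<or> j+1=i \<or> (i=0 \<and> j=n) \<or> (j=0 \<and> i=n))"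
        using cycle_E_iff[OF i j] assms(2) by simp
      show "E (?q i) (?q j) \<longleftrightarrow> cycle_E (Suc n) i j"
      proof (cases "i = 0"; cases "j = 0")
        assume "i = 0" "j = 0" then show ?thesis using irr assms(2,3) c by simp
      next
        assume "i = 0" "j \<noteq> 0" then show ?thesis using assms(5) j c by auto
      next
        assume "i \<noteq> 0" "j = 0" then show ?thesis using zE i c by auto
      next
        assume "i \<noteq> 0" "j \<noteq> 0" then show ?thesis using rE i j c by (auto simp: path_E_def)
      qed
    qed
  qed
qed

end


definition near :: "nat \<Rightarrow> nat \<Rightarrow> bool" where
  "near i k \<longleftrightarrow> Suc k = i \<or> k = i \<or> Suc i = k"

locale mp = gr V E for V :: "'a set" and E +
  fixes p :: "nat \<Rightarrow> 'a" and m :: nat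
  assumes P: "ipath V E p m" and MAX: "\<And>q n. ipath V E q n \<Longrightarrow> n \<le> m"
begin

lemma pV: "k < m \<Longrightarrow> p k \<in> V" using P unfolding ipath_def by auto
lemma pinj: "k < m \<Longrightarrow> l < m \<Longrightarrow> p k = p l \<longleftrightarrow> k = l"
  using P unfolding ipath_def inj_on_def by auto
lemma pE: "k < m \<Longrightarrow> l < m \<Longrightarrow> E (p k) (p l) \<longleftrightarrow> (Suc k = l \<or> Suc l = k)"
  using P unfolding ipath_def path_E_def by auto

lemma noext_front:
  assumes "z \<in> V" "z \<notin> p ` {..<m}" "\<forall>k<m. E z (p k) \<longleftrightarrow> k = 0"
  shows False
  using MAX[OF ipath_cons[OF P assms]] by simp

lemma noext_back:
  assumes "z \<in> V" "z \<notin> p ` {..<m}" "\<forall>k<m. E z (p k) \<longleftrightarrow> Suc k = m"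
  shows False
  using MAX[OF ipath_snoc[OF P assms]] by simp

lemma cls:
  assumes z: "z \<in> V" "z \<notin> p ` {..<m}" and adj: "k0 < m" "E z (p k0)"
  shows "(\<exists>i<m. \<forall>k<m. E z (p k) \<longleftrightarrow> near i k) \<or> (m = 4 \<and> (\<forall>k<m. E z (p k)))"
proof -
  have zne: "z \<noteq> p k" "p k \<noteq> z" if "k < m" for k using z(2) that by auto
  have interval: "E z (p k)" if jkl: "j < k" "k < l" "l < m" "E z (p j)" "E z (p l)" for j k l
  proof (rule ccontr)
    assume nk: "\<not> E z (p k)"
    define A where "A = {t. t < k \<and> E z (p t)}"
    define B where "B = {t. k < t \<and> t < m \<and> E z (p t)}"
    have Afin: "finite A" "A \<noteq> {}" using jkl unfolding A_def by auto
    have Bfin: "finite B" "B \<noteq> {}" using jkl unfolding B_def by auto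
    define j' where "j' = Max A"
    define l' where "l' = Min B"
    have j'A: "j' \<in> A" using Afin j'_def Max_in by blast
    have l'B: "l' \<in> B" using Bfin l'_def Min_in by blast
    have j'max: "t \<le> j'" if "t \<in> A" for t using Afin that j'_def by simp
    have l'min: "l' \<le> t" if "t \<in> B" for t using Bfin that l'_def by simp
    have jk: "j' < k" "E z (p j')" using j'A A_def by auto
    have lk: "k < l'" "l' < m" "E z (p l')" using l'B B_def by auto
    have gap: "\<not> E z (p t)" if "j' < t" "t < l'" for t
    proof
      assume e: "E z (p t)"
      consider "t < k" | "t = k" | "k < t" by linarith
      then show False
      proof cases
        case 1 then have "t \<in> A" using e A_def by auto
        then show False using j'max that by fastforce
      next
        case 2 then show False using nk e by simp
      next
        case 3 then have "t \<in> B" using e B_def lk that by auto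
        then show False using l'min that by fastforce
      qed
    qed
    show False
    proof (rule hole_from_path[of "\<lambda>t. p (j'+t)" "l' - j' + 1" z])
      show "ipath V E (\<lambda>t. p (j' + t)) (l' - j' + 1)" using ipath_shift[OF P] lk jk by simp
      show "3 \<le> l' - j' + 1" using jk lk by simp
      show "z \<in> V" by fact
      have "j' + t < m" if "t < l'-j'+1" for t using that lk jk by linarith
      then show "z \<notin> (\<lambda>t. p (j'+t)) ` {..<l'-j'+1}" using zne by blast
      show "\<forall>t<l'-j'+1. E z (p (j'+t)) \<longleftrightarrow> (t = 0 \<or> Suc t = l'-j'+1)"
      proof (intro allI impI)
        fix t assume "t < l'-j'+1"
        then show "E z (p (j'+t)) \<longleftrightarrow> (t = 0 \<or> Suc t = l'-j'+1)" using gap[of "j'+t"] jk lk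
          by (cases "t = 0"; cases "Suc t = l'-j'+1") auto
      qed
    qed
  qed
  define S where "S = {k. k < m \<and> E z (p k)}"
  have Sfin: "finite S" "S \<noteq> {}" using adj S_def by auto
  define a where "a = Min S"
  define b where "b = Max S"
  have aS: "a \<in> S" and bS: "b \<in> S" using Sfin a_def b_def by auto
  have ab: "a \<le> b" "b < m" using aS bS S_def Sfin a_def b_def by auto
  have Ea: "E z (p a)" and Eb: "E z (p b)" using aS bS S_def by auto
  have hS: "E z (p k) \<longleftrightarrow> a \<le> k \<and> k \<le> b" if "k < m" for k
  proof
    assume "E z (p k)" then have "k \<in> S" using that S_def by auto
    then show "a \<le> k \<and> k \<le> b" using Sfin a_def b_def by simp
  next
    assume "a \<le> k \<and> k \<le> b" then show "E z (p k)" using interval[of a k b] Ea Eb ab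
      by (cases "k = a"; cases "k = b") auto
  qed
  have hz: "E (p k) z \<longleftrightarrow> E z (p k)" if "k < m" for k using sym z(1) pV that by blast
  have b3: "b \<le> a + 3"
  proof (rule ccontr)
    assume nb: "\<not> b \<le> a+3"
    then have "a+4 < m" "a + 2 < m" "a < m" using ab by auto
    then show False
      by (intro claw[of z "p a" "p (a+2)" "p (a+4)"]) (use z ab nb in \<open>simp_all add: pV pE pinj hS\<close>)
  qed
  then consider "b = a" | "b = a+1" | "b = a+2" | "b = a+3" using ab(1) by linarith
  then show ?thesis
  proof cases
    case 1
    show ?thesis
    proof (cases "a = 0")
      case True
      have "\<forall>k<m. E z (p k) \<longleftrightarrow> k = 0" using hS 1 True by auto
      then show ?thesis using noext_front[OF z] by blast
    next
      case a0: False
      show ?thesis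
      proof (cases "Suc a = m")
        case True
        have "\<forall>k<m. E z (p k) \<longleftrightarrow> Suc k = m" using hS 1 True by auto
        then show ?thesis using noext_back[OF z] by blast
      next
        case False
        then have am: "a + 1 < m" "a - 1 < m" "a < m" using ab 1 by auto
        have False
          by (rule claw[of "p a" "p (a-1)" "p (a+1)" z])
            (use z am a0 1 in \<open>simp_all add: pV pE pinj hS hz zne\<close>)
        then show ?thesis by simp
      qed
    qed
  next
    case 2
    show ?thesis
    proof (cases "a = 0")
      case True then show ?thesis using hS 2 ab by (intro disjI1 exI[of _ 0]) (auto simp: near_def)
    next
      case a0: False
      show ?thesis
      proof (cases "a + 2 = m")
        case True then show ?thesis using hS 2 ab
          by (intro disjI1 exI[of _ "a+1"]) (auto simp: near_def)
      next
        case False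
        then have am: "a + 2 < m" "a+1 < m" "a - 1 < m" "a < m" using ab 2 by auto
        have False
          by (rule bull[of "p a" "p (a+1)" z "p (a-1)" "p (a+2)"])
            (use z am a0 2 in \<open>simp_all add: pV pE pinj hS hz zne\<close>)
        then show ?thesis by simp
      qed
    qed
  next
    case 3
    then show ?thesis using hS ab by (intro disjI1 exI[of _ "a+1"]) (auto simp: near_def)
  next
    case 4
    show ?thesis
    proof (cases "a \<ge> 1")
      case a1: True
      have am: "a + 3 < m" "a+1 < m" "a - 1 < m" "a < m" using ab 4 by auto
      have False
        by (rule bull[of z "p a" "p (a+1)" "p (a+3)" "p (a-1)"])
          (use z am a1 4 in \<open>simp_all add: pV pE pinj hS hz zne\<close>)
      then show ?thesis by simp
    next
      case a0: False
      show ?thesis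
      proof (cases "a + 4 < m")
        case True
        have am: "a + 3 < m" "a+2 < m" "a < m" using True by auto
        have False
          by (rule bull[of z "p (a+3)" "p (a+2)" "p a" "p (a+4)"])
            (use z am True 4 in \<open>simp_all add: pV pE pinj hS hz zne\<close>)
        then show ?thesis by simp
      next
        case False
        then have "a = 0" "m = 4" using a0 ab 4 by auto
        then show ?thesis using hS 4 by auto
      qed
    qed
  qed
qed

end


context mp begin

definition tp :: "'a \<Rightarrow> nat \<Rightarrow> bool" where
  "tp v i \<longleftrightarrow> (\<forall>k<m. (E v (p k) \<or> v = p k) \<longleftrightarrow> near i k)"

definition dominated :: "'a \<Rightarrow> bool" where
  "dominated v \<longleftrightarrow> (\<exists>k<m. v = p k \<or> E v (p k))"

lemma tp_p: "i < m \<Longrightarrow> tp (p i) i"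
  unfolding tp_def near_def using pE pinj by auto

lemma tp_uniq:
  assumes "3 \<le> m" "tp v i" "tp v j" "i < m" "j < m"
  shows "i = j"
proof -
  have H: "near i k \<longleftrightarrow> near j k" if "k < m" for k using assms(2,3) that unfolding tp_def by blast
  show ?thesis
    using H[of i] H[of j] H[of "i-1"] H[of "j-1"] H[of "i+1"] H[of "j+1"] H[of 2] H[of 0] assms(1,4,5)
    unfolding near_def by presburger
qed

lemma tp_P: "3 \<le> m \<Longrightarrow> tp v i \<Longrightarrow> i < m \<Longrightarrow> k < m \<Longrightarrow> v = p k \<Longrightarrow> k = i"
  using tp_uniq tp_p by blast

lemma tp_adj: "3 \<le> m \<Longrightarrow> tp v i \<Longrightarrow> i < m \<Longrightarrow> k < m \<Longrightarrow> k \<noteq> i \<Longrightarrow> E v (p k) \<longleftrightarrow> near i k"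
  using tp_P[of v i k] unfolding tp_def by blast

lemma tp_self: "tp v i \<Longrightarrow> i < m \<Longrightarrow> v \<noteq> p i \<Longrightarrow> E v (p i)"
  unfolding tp_def near_def by blast

lemma tp_out: "v \<notin> p ` {..<m} \<Longrightarrow> (\<forall>k<m. E v (p k) \<longleftrightarrow> near i k) \<Longrightarrow> tp v i"
  unfolding tp_def by auto

lemma dom_step:
  assumes u: "u \<in> V" "dominated u" and w: "w \<in> V" "E u w"
  shows "dominated w"
proof (rule ccontr)
  assume nd: "\<not> dominated w"
  then have wn: "w \<noteq> p k" "p k \<noteq> w" "\<not> E w (p k)" "\<not> E (p k) w" if "k < m" for k
    using that sym[OF pV w(1)] unfolding dominated_def by blast+
  have wu: "E w u" using sym u w by blast
  have uw: "u \<noteq> w" using irr w by auto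
  show False
  proof (cases "u \<in> p ` {..<m}")
    case True
    then obtain k where "k < m" "u = p k" by auto
    then show False using wn w by auto
  next
    case uP: False
    have une: "u \<noteq> p k" "p k \<noteq> u" if "k < m" for k using uP that by auto
    obtain k0 where k0: "k0 < m" "E u (p k0)" using u(2) uP unfolding dominated_def by auto
    have hu: "E (p k) u \<longleftrightarrow> E u (p k)" if "k < m" for k using sym u(1) pV that by blast
    from cls[OF u(1) uP k0]
    show False
    proof
      assume "\<exists>i<m. \<forall>k<m. E u (p k) \<longleftrightarrow> near i k"
      then obtain i where i: "i < m" "\<And>k. k < m \<Longrightarrow> E u (p k) \<longleftrightarrow> near i k" by auto
      consider "0 < i" "i + 1 < m" | "i = 0" | "i + 1 = m" using i by linarith
      then show False
      proof cases
        case 1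
        then have am: "i - 1 < m" "i + 1 < m" "i < m" by auto
        show False
          by (rule claw[of u "p (i-1)" "p (i+1)" w])
            (use u w am 1 wu in \<open>simp_all add: pV pE pinj i near_def hu une wn\<close>)
      next
        case 2
        let ?q = "\<lambda>t. if t = 0 then u else p (1 + (t - 1))"
        have q1: "ipath V E ?q (Suc (m-1))"
        proof (rule ipath_cons)
          show "ipath V E (\<lambda>t. p (1 + t)) (m - 1)" using ipath_shift[OF P, of 1 "m-1"] i by simp
          show "u \<in> V" by fact
          show "u \<notin> (\<lambda>t. p (1 + t)) ` {..<m-1}" using uP by (auto simp: less_diff_conv)
          show "\<forall>k<m-1. E u (p (1 + k)) \<longleftrightarrow> k = 0" using i 2 by (auto simp: near_def)
        qed
        have "ipath V E (\<lambda>t. if t = 0 then w else ?q (t-1)) (Suc (Suc (m-1)))"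
        proof (rule ipath_cons[OF q1 w(1)])
          show "w \<notin> ?q ` {..<Suc (m-1)}" using uw wn i by auto
          show "\<forall>k<Suc (m-1). E w (?q k) \<longleftrightarrow> k = 0"
          proof (intro allI impI)
            fix k assume k: "k < Suc (m-1)"
            show "E w (?q k) \<longleftrightarrow> k = 0"
            proof (cases "k = 0")
              case False then show ?thesis using wn[of k] k i by auto
            qed (use wu in simp)
          qed
        qed
        then show False using MAX i by fastforce
      next
        case 3
        let ?q = "(\<lambda>t. p (0 + t))(m-1 := u)"
        have q1: "ipath V E ?q (Suc (m-1))"
        proof (rule ipath_snoc)
          show "ipath V E (\<lambda>t. p (0 + t)) (m - 1)" using ipath_shift[OF P, of 0 "m-1"] by simp
          show "u \<in> V" by fact
          show "u \<notin> (\<lambda>t. p (0 + t)) ` {..<m-1}" using uP by auto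
          show "\<forall>k<m-1. E u (p (0 + k)) \<longleftrightarrow> Suc k = m - 1" using i 3 by (auto simp: near_def)
        qed
        have "ipath V E (?q(Suc (m-1) := w)) (Suc (Suc (m-1)))"
        proof (rule ipath_snoc[OF q1 w(1)])
          show "w \<notin> ?q ` {..<Suc (m-1)}" using uw wn i by auto
          show "\<forall>k<Suc (m-1). E w (?q k) \<longleftrightarrow> Suc k = Suc (m-1)"
          proof (intro allI impI)
            fix k assume k: "k < Suc (m-1)"
            show "E w (?q k) \<longleftrightarrow> Suc k = Suc (m-1)"
            proof (cases "k = m - 1")
              case False then show ?thesis using wn[of k] k i by auto
            qed (use wu in simp)
          qed
        qed
        then show False using MAX i by fastforce
      qed
    next
      assume full: "m = 4 \<and> (\<forall>k<m. E u (p k))"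
      show False
        by (rule claw[of u "p 0" "p 2" w]) (use u w full wu in \<open>simp_all add: pV pE pinj hu une wn\<close>)
    qed
  qed
qed

lemma dom:
  assumes C: "connected_graph V E" and m0: "0 < m" and v: "v \<in> V"
  shows "dominated v"
proof -
  obtain xs where xs: "walk V E xs" "hd xs = p 0" "last xs = v"
    using C v pV[OF m0] unfolding connected_graph_def by blast
  have ne: "xs \<noteq> []" and sub: "set xs \<subseteq> V" and st: "\<And>i. Suc i < length xs \<Longrightarrow> E (xs ! i) (xs ! Suc i)"
    using xs(1) unfolding walk_def by auto
  have "dominated (xs ! i)" if "i < length xs" for i
    using that
  proof (induction i)
    case 0
    then show ?case using xs(2) ne m0 hd_conv_nth[OF ne] unfolding dominated_def by force
  next
    case (Suc i)
    have "xs ! i \<in> V" "xs ! Suc i \<in> V" using Suc.prems sub nth_mem[of i xs] nth_mem[of "Suc i" xs] by auto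
    then show ?case using dom_step[of "xs ! i" "xs ! Suc i"] st[of i] Suc by auto
  qed
  then show ?thesis using xs(3) ne last_conv_nth[OF ne] by auto
qed

end


context mp begin

lemma P3:
  assumes "x \<in> V" "y \<in> V" "z \<in> V" "E x y" "E y z" "\<not> E x z" "x \<noteq> z"
  shows "3 \<le> m"
proof -
  let ?q = "\<lambda>t::nat. if t = 0 then x else if t = 1 then y else z"
  have s: "E y x" "E z y" "\<not> E z x" using assms sym by blast+
  have i: "\<not> E x x" "\<not> E y y" "\<not> E z z" using assms irr by auto
  have d: "x \<noteq> y" "y \<noteq> z" using assms i by metis+
  have U: "{..<3::nat} = {0,1,2}" by auto
  have "ipath V E ?q 3" unfolding ipath_def
  proof (intro conjI)
    show "\<forall>i<3. ?q i \<in> V" using assms(1-3) by auto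
    show "inj_on ?q {..<3}" unfolding U inj_on_def using d assms(7) by auto
    have "\<forall>i\<in>{..<3}. \<forall>j\<in>{..<3}. E (?q i) (?q j) \<longleftrightarrow> path_E i j"
      unfolding U using assms s i by (auto simp: path_E_def)
    then show "\<forall>i<3. \<forall>j<3. E (?q i) (?q j) \<longleftrightarrow> path_E i j" by auto
  qed
  then show ?thesis using MAX by blast
qed

lemma typed:
  assumes C: "connected_graph V E" and m0: "0 < m" and v: "v \<in> V"
  shows "(\<exists>i<m. tp v i) \<or> (m = 4 \<and> v \<notin> p ` {..<m} \<and> (\<forall>k<m. E v (p k)))"
proof (cases "v \<in> p ` {..<m}")
  case True
  then show ?thesis using tp_p by auto
next
  case False
  obtain k0 where "k0 < m" "E v (p k0)" using dom[OF C m0 v] False unfolding dominated_def by auto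
  from cls[OF v False this] show ?thesis using tp_out[OF False] False by blast
qed

lemma m_ge3:
  assumes C: "connected_graph V E" and m0: "0 < m"
    and abc: "a \<in> V" "b \<in> V" "c \<in> V" "a \<noteq> b" "a \<noteq> c" "b \<noteq> c"
      "\<not> E a b" "\<not> E a c" "\<not> E b c"
  shows "3 \<le> m"
proof (rule ccontr)
  assume "\<not> 3 \<le> m"
  then have m2: "m \<le> 2" by simp
  have cl: "v \<in> p ` {..<m} \<or> (v \<notin> p ` {..<m} \<and> (\<forall>k<m. E v (p k)))" if vV: "v \<in> V" for v
  proof (cases "v \<in> p ` {..<m}")
    case False
    obtain k0 where "k0 < m" "E v (p k0)" using dom[OF C m0 vV] False unfolding dominated_def by auto
    from cls[OF vV False this] m2 show ?thesis using False unfolding near_def by force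
  qed simp
  show False
  proof (cases "m = 1")
    case True
    have "v = p 0" if "v \<in> V" for v
    proof -
      have "v \<notin> p ` {..<m} \<Longrightarrow> False"
        using cl[OF that] noext_front[OF that] True by auto
      then show ?thesis using True by auto
    qed
    then show False using abc by metis
  next
    case False
    then have m: "m = 2" using m0 m2 by simp
    have PP: "E x y" if "x \<in> p ` {..<m}" "y \<in> V" "x \<noteq> y" for x y
    proof (cases "y \<in> p ` {..<m}")
      case True
      then show ?thesis using that m pE by (auto simp: less_2_cases_iff)
    next
      case False
      then show ?thesis using cl[OF that(2)] that(1) sym pV that(2) by blast
    qed
    have aP: "a \<notin> p ` {..<m}" using PP[of a b] abc by blast
    have bP: "b \<notin> p ` {..<m}" using PP[of b a] abc sym by blast
    have "\<forall>k<m. E a (p k)" using cl[OF abc(1)] aP by blast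
    then have ea: "E a (p 0)" using m by simp
    have "\<forall>k<m. E b (p k)" using cl[OF abc(2)] bP by blast
    then have "E b (p 0)" using m by simp
    then have "3 \<le> m" using ea P3[of a "p 0" b] abc pV[of 0] m sym[of b "p 0"] by auto
    then show False using m by simp
  qed
qed

lemma same_type:
  assumes m3: "3 \<le> m" and v: "v \<in> V" "tp v i" and w: "w \<in> V" "tp w i" and i: "i < m" and vw: "v \<noteq> w"
  shows "E v w"
proof -
  show ?thesis
  proof (cases "v \<in> p ` {..<m}")
    case True
    then obtain k where k: "k < m" "v = p k" by auto
    then have ki: "k = i" using tp_P[OF m3 v(2) i] by auto
    then have "E w (p i)" using tp_self[OF w(2) i] vw k by auto
    then show ?thesis using sym[OF w(1) pV[OF i]] k ki by simp
  next
    case vP: False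
    show ?thesis
    proof (cases "w \<in> p ` {..<m}")
      case True
      then obtain k where k: "k < m" "w = p k" by auto
      then have "k = i" using tp_P[OF m3 w(2) i] by auto
      then show ?thesis using tp_self[OF v(2) i] vw k by auto
    next
      case wP: False
      have hv: "E v (p k) \<longleftrightarrow> near i k" if "k < m" for k using v(2) vP that unfolding tp_def by auto
      have hw: "E w (p k) \<longleftrightarrow> near i k" if "k < m" for k using w(2) wP that unfolding tp_def by auto
      have hv': "E (p k) v \<longleftrightarrow> near i k" if "k < m" for k using hv that sym pV v by blast
      have hw': "E (p k) w \<longleftrightarrow> near i k" if "k < m" for k using hw that sym pV w by blast
      have vne: "v \<noteq> p k" "p k \<noteq> v" "w \<noteq> p k" "p k \<noteq> w" if "k < m" for k using vP wP that by auto
      show ?thesis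
      proof (rule ccontr)
        assume nvw: "\<not> E v w"
        then have nwv: "\<not> E w v" using sym v w by blast
        consider "0 < i" "i + 1 < m" | "i = 0" | "i + 1 = m" using i by linarith
        then show False
        proof cases
          case 1
          have am: "i - 1 < m" "i + 1 < m" by (use 1 in auto)
          show False
            by (rule C4[of v "p (i-1)" w "p (i+1)"])
              (use v w am 1 nvw vw in \<open>auto simp add: pV pE pinj hv hw hv' hw' near_def\<close>)
        next
          case 2
          show False
            by (rule claw[of "p 1" v w "p 2"])
              (use v w m3 2 nvw nwv vw in \<open>auto simp add: pV pE pinj hv hw hv' hw' near_def vne\<close>)
        next
          case 3
          have am: "i - 1 < m" "i - 2 < m" "2 \<le> i" "i < m" by (use m3 3 in auto)
          show False
            by (rule claw[of "p (i-1)" v w "p (i-2)"])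
              (use v w m3 am 3 nvw nwv vw in \<open>auto simp add: pV pE pinj hv hw hv' hw' near_def vne\<close>)
        qed
      qed
    qed
  qed
qed

end


context mp begin

lemma adj_type:
  assumes m3: "3 \<le> m" and v: "v \<in> V" "tp v i" and w: "w \<in> V" "tp w (Suc i)"
    and i: "Suc i < m" and cond: "i + 3 < m \<or> 2 \<le> i"
  shows "E v w"
proof -
  have im: "i < m" using i by simp
  show ?thesis
  proof (cases "v \<in> p ` {..<m}")
    case True
    then obtain k where k: "k < m" "v = p k" by auto
    then have ki: "k = i" using tp_P[OF m3 v(2) im] by auto
    have "w \<noteq> p i" using tp_P[OF m3 w(2) i im] by auto
    then have "E w (p i)" using tp_adj[OF m3 w(2) i im] by (simp add: near_def)
    then show ?thesis using sym[OF w(1) pV[OF im]] k ki by simp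
  next
    case vP: False
    show ?thesis
    proof (cases "w \<in> p ` {..<m}")
      case True
      then obtain k where k: "k < m" "w = p k" by auto
      then have ki: "k = Suc i" using tp_P[OF m3 w(2) i] by auto
      have "E v (p (Suc i))" using tp_adj[OF m3 v(2) im i] by (simp add: near_def)
      then show ?thesis using k ki by simp
    next
      case wP: False
      have hv: "E v (p k) \<longleftrightarrow> near i k" if "k < m" for k using v(2) vP that unfolding tp_def by auto
      have hw: "E w (p k) \<longleftrightarrow> near (Suc i) k" if "k < m" for k using w(2) wP that unfolding tp_def by auto
      have hv': "E (p k) v \<longleftrightarrow> near i k" if "k < m" for k using hv that sym pV v by blast
      have hw': "E (p k) w \<longleftrightarrow> near (Suc i) k" if "k < m" for k using hw that sym pV w by blast
      have vne: "v \<noteq> p k" "p k \<noteq> v" "w \<noteq> p k" "p k \<noteq> w" if "k < m" for k using vP wP that by auto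
      show ?thesis
      proof (rule ccontr)
        assume nvw: "\<not> E v w"
        then have nwv: "\<not> E w v" using sym v w by blast
        show False
        proof (cases "i + 3 < m")
          case True
          show False
            by (rule bull[of "p (i+2)" "p (i+1)" w "p (i+3)" v])
              (use v w True nvw nwv in \<open>auto simp add: pV pE pinj hv hw hv' hw' near_def vne\<close>)
        next
          case False
          then have am: "2 \<le> i" "i - 1 < m" "i - 2 < m" using cond im by auto
          show False
            by (rule bull[of "p (i-1)" "p i" v "p (i-2)" w])
              (use v w am im nvw nwv in \<open>auto simp add: pV pE pinj hv hw hv' hw' near_def vne\<close>)
        qed
      qed
    qed
  qed
qed

lemma far_type:
  assumes m5: "5 \<le> m" and v: "v \<in> V" "tp v i" and w: "w \<in> V" "tp w j"
    and ij: "i + 2 \<le> j" "j < m"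
  shows "\<not> E v w"
proof
  assume e: "E v w"
  have ew: "E w v" using sym v w e by blast
  have m3: "3 \<le> m" and im: "i < m" using m5 ij by auto
  have vP: "v \<notin> p ` {..<m}"
  proof
    assume "v \<in> p ` {..<m}"
    then obtain k where k: "k < m" "v = p k" by auto
    then have "k = i" using tp_P[OF m3 v(2) im] by auto
    then have "E w (p i)" using ew k by simp
    then show False using tp_adj[OF m3 w(2) ij(2) im] ij by (simp add: near_def)
  qed
  have wP: "w \<notin> p ` {..<m}"
  proof
    assume "w \<in> p ` {..<m}"
    then obtain k where k: "k < m" "w = p k" by auto
    then have "k = j" using tp_P[OF m3 w(2) ij(2)] by auto
    then have "E v (p j)" using e k by simp
    then show False using tp_adj[OF m3 v(2) im ij(2)] ij by (simp add: near_def)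
  qed
  have hv: "E v (p k) \<longleftrightarrow> near i k" if "k < m" for k using v(2) vP that unfolding tp_def by auto
  have hw: "E w (p k) \<longleftrightarrow> near j k" if "k < m" for k using w(2) wP that unfolding tp_def by auto
  have hv': "E (p k) v \<longleftrightarrow> near i k" if "k < m" for k using hv that sym pV v by blast
  have hw': "E (p k) w \<longleftrightarrow> near j k" if "k < m" for k using hw that sym pV w by blast
  have vne: "v \<noteq> p k" "p k \<noteq> v" "w \<noteq> p k" "p k \<noteq> w" if "k < m" for k using vP wP that by auto
  consider "j = i + 2" | "i + 3 \<le> j" using ij by linarith
  then show False
  proof cases
    case 1
    show False
    proof (cases "1 \<le> i \<and> i + 3 < m")
      case True
      show False
        by (rule bull[of v w "p (i+1)" "p (i-1)" "p (i+3)"])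
          (use v w True e ew 1 in \<open>auto simp add: pV pE pinj hv hw hv' hw' near_def vne\<close>)
    next
      case nA: False
      show False
      proof (cases "i + 4 < m")
        case True
        show False
          by (rule bull[of "p (i+3)" w "p (i+2)" "p (i+4)" v])
            (use v w True e ew 1 in \<open>auto simp add: pV pE pinj hv hw hv' hw' near_def vne\<close>)
      next
        case False
        then have am: "2 \<le> i" "i - 1 < m" "i - 2 < m" "i < m" using nA m5 im by auto
        show False
          by (rule bull[of "p (i-1)" v "p i" "p (i-2)" w])
            (use v w am e ew 1 in \<open>auto simp add: pV pE pinj hv hw hv' hw' near_def vne\<close>)
      qed
    qed
  next
    case 2
    let ?r = "\<lambda>t. if t = 0 then v else p (i + 1 + (t - 1))"
    have r: "ipath V E ?r (Suc (j - i - 1))"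
    proof (rule ipath_cons)
      show "ipath V E (\<lambda>t. p (i + 1 + t)) (j - i - 1)" using ipath_shift[OF P, of "i+1" "j-i-1"] ij 2 by simp
      show "v \<in> V" by fact
      show "v \<notin> (\<lambda>t. p (i + 1 + t)) ` {..<j-i-1}" using vP ij by auto
      show "\<forall>k<j-i-1. E v (p (i + 1 + k)) \<longleftrightarrow> k = 0" using hv ij by (auto simp: near_def)
    qed
    show False
    proof (rule hole_from_path[OF r _ w(1)])
      show "3 \<le> Suc (j - i - 1)" using 2 by simp
      have "w \<noteq> v" using irr e v by auto
      then show "w \<notin> ?r ` {..<Suc (j - i - 1)}" using wP ij by auto
      show "\<forall>k<Suc (j - i - 1). E w (?r k) \<longleftrightarrow> (k = 0 \<or> Suc k = Suc (j - i - 1))"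
      proof (intro allI impI)
        fix k assume k: "k < Suc (j - i - 1)"
        show "E w (?r k) \<longleftrightarrow> (k = 0 \<or> Suc k = Suc (j - i - 1))"
        proof (cases "k = 0")
          case False
          then have "i + 1 + (k - 1) < m" using k ij by auto
          then show ?thesis using hw[of "i + 1 + (k-1)"] False k ij by (auto simp: near_def)
        qed (use ew in simp)
      qed
    qed
  qed
qed

end


context mp begin

lemma claw012:
  assumes m3: "3 \<le> m" and x: "x \<in> V" "tp x 0" and y: "y \<in> V" "tp y 1" and z: "z \<in> V" "tp z 2"
    and ne: "\<not> E x y" "\<not> E x z" "\<not> E y z" "x \<noteq> y" "x \<noteq> z" "y \<noteq> z"
  shows False
proof -
  have m: "0 < m" "1 < m" "2 < m" using m3 by auto
  have ex: "E x (p 1)" using tp_adj[OF m3 x(2) m(1) m(2)] by (simp add: near_def)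
  have "y \<noteq> p 1" using ex ne by auto
  then have ey: "E y (p 1)" using tp_self[OF y(2) m(2)] by simp
  have ez: "E z (p 1)" using tp_adj[OF m3 z(2) m(3) m(2)] by (simp add: near_def)
  show False
    by (rule claw[of "p 1" x y z])
      (use x y z ne m pV[of 1] sym[OF x(1) pV[of 1] ex] sym[OF y(1) pV[of 1] ey] sym[OF z(1) pV[of 1] ez] in auto)
qed

lemma small:
  assumes C: "connected_graph V E" and m34: "m = 3 \<or> m = 4"
    and abc: "a \<in> V" "b \<in> V" "c \<in> V" "a \<noteq> b" "a \<noteq> c" "b \<noteq> c"
      "\<not> E a b" "\<not> E a c" "\<not> E b c"
  shows False
proof -
  define I where "I = {a, b, c}"
  have IV: "I \<subseteq> V" using abc I_def by auto
  have ind: "\<not> E x y" if "x \<in> I" "y \<in> I" "x \<noteq> y" for x y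
    using that abc sym unfolding I_def by blast
  have m3: "3 \<le> m" and m0: "0 < m" using m34 by auto
  show False
  proof (cases "m = 3")
    case True
    have ty: "\<exists>i<3. tp v i" if "v \<in> I" for v using typed[OF C m0, of v] that IV True by auto
    obtain ta where ta: "ta < 3" "tp a ta" using ty[of a] I_def by auto
    obtain tb where tb: "tb < 3" "tp b tb" using ty[of b] I_def by auto
    obtain tc where tc: "tc < 3" "tp c tc" using ty[of c] I_def by auto
    have d: "ta \<noteq> tb" "ta \<noteq> tc" "tb \<noteq> tc"
      using same_type[OF m3] ta tb tc abc True by metis+
    have "\<exists>x\<in>I. tp x t" if "t < 3" for t
    proof -
      have "t = ta \<or> t = tb \<or> t = tc" using d ta tb tc that by arith
      then show ?thesis using ta tb tc I_def by auto
    qed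
    note ex = this
    obtain x where x: "x \<in> I" "tp x 0" using ex[of 0] by auto
    obtain y where y: "y \<in> I" "tp y 1" using ex[of 1] by auto
    obtain z where z: "z \<in> I" "tp z 2" using ex[of 2] by auto
    note xyz = x y z
    have dd: "x \<noteq> y" "x \<noteq> z" "y \<noteq> z" using tp_uniq[OF m3, of x 0 1] tp_uniq[OF m3, of x 0 2] tp_uniq[OF m3, of y 1 2] xyz True by auto
    show False using claw012[OF m3, of x y z] xyz IV dd ind by auto
  next
    case False
    then have m4: "m = 4" using m34 by simp
    define L where "L v \<longleftrightarrow> (\<exists>i\<le>1. tp v i)" for v
    define R where "R v \<longleftrightarrow> (\<exists>i. 2 \<le> i \<and> i < 4 \<and> tp v i)" for v
    define Fu where "Fu v \<longleftrightarrow> v \<notin> p ` {..<m} \<and> (\<forall>k<m. E v (p k))" for v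
    have cl: "L v \<or> R v \<or> Fu v" if "v \<in> I" for v
    proof -
      have "(\<exists>i<m. tp v i) \<or> Fu v" using typed[OF C m0, of v] that IV unfolding Fu_def by auto
      then show ?thesis
      proof (elim disjE exE conjE)
        fix i assume "i < m" "tp v i"
        then show ?thesis unfolding L_def R_def using m4 by (cases "i \<le> 1") auto
      qed simp
    qed
    have LL: False if H: "x \<in> I" "y \<in> I" "x \<noteq> y" "L x" "L y" for x y
    proof -
      obtain i j where ij: "i \<le> 1" "tp x i" "j \<le> 1" "tp y j" using H unfolding L_def by auto
      have xy: "x \<in> V" "y \<in> V" using H IV by auto
      have "E x y \<or> E y x"
      proof (cases "i = j")
        case True then show ?thesis using same_type[OF m3 xy(1) ij(2) xy(2)] ij H m4 by auto
      next
        case False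
        then have "(i = 0 \<and> j = 1) \<or> (i = 1 \<and> j = 0)" using ij by auto
        then show ?thesis using adj_type[OF m3 xy(1) _ xy(2), of 0] adj_type[OF m3 xy(2) _ xy(1), of 0] ij m4
          by auto
      qed
      then show False using ind H by blast
    qed
    have RR: False if H: "x \<in> I" "y \<in> I" "x \<noteq> y" "R x" "R y" for x y
    proof -
      obtain i j where ij: "2 \<le> i" "i < 4" "tp x i" "2 \<le> j" "j < 4" "tp y j" using H unfolding R_def by auto
      have xy: "x \<in> V" "y \<in> V" using H IV by auto
      have "E x y \<or> E y x"
      proof (cases "i = j")
        case True then show ?thesis using same_type[OF m3 xy(1) ij(3) xy(2)] ij H m4 by auto
      next
        case False
        then have "(i = 2 \<and> j = 3) \<or> (i = 3 \<and> j = 2)" using ij by auto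
        then show ?thesis using adj_type[OF m3 xy(1) _ xy(2), of 2] adj_type[OF m3 xy(2) _ xy(1), of 2] ij m4
          by (auto simp: numeral_3_eq_3)
      qed
      then show False using ind H by blast
    qed
    have FF: False if H: "x \<in> I" "y \<in> I" "x \<noteq> y" "Fu x" "Fu y" for x y
    proof -
      have xy: "x \<in> V" "y \<in> V" using H IV by auto
      have ex: "\<forall>k<m. E x (p k)" "\<forall>k<m. E y (p k)" using H unfolding Fu_def by auto
      have "\<not> E x y" using ind H by blast
      then show False
        using C4[of x "p 0" y "p 2"] xy ex m4 pV[of 0] pV[of 2] pE[of 0 2] pinj[of 0 2] sym[of y "p 0"] sym[of x "p 2"] H(3)
        by auto
    qed
    have LRF: False if H: "x \<in> I" "y \<in> I" "z \<in> I" "x \<noteq> y" "x \<noteq> z" "y \<noteq> z" "L x" "R y" "Fu z" for x y z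
    proof -
      obtain i j where ij: "i \<le> 1" "tp x i" "2 \<le> j" "j < 4" "tp y j" using H unfolding L_def R_def by auto
      have xyz: "x \<in> V" "y \<in> V" "z \<in> V" using H IV by auto
      have ez: "\<forall>k<m. E z (p k)" and zP: "z \<notin> p ` {..<m}" using H unfolding Fu_def by auto
      have n: "\<not> E x y" "\<not> E x z" "\<not> E y z" "\<not> E y x" "\<not> E z x" "\<not> E z y" using ind H by blast+
      have xP: "x \<notin> p ` {..<m}" using ez n by auto
      have yP: "y \<notin> p ` {..<m}" using ez n by auto
      have hx: "E x (p k) \<longleftrightarrow> near i k" if "k < m" for k using ij xP that unfolding tp_def by auto
      have hy: "E y (p k) \<longleftrightarrow> near j k" if "k < m" for k using ij yP that unfolding tp_def by auto
      have hx': "E (p k) x \<longleftrightarrow> near i k" if "k < m" for k using hx that sym pV xyz by blast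
      have hy': "E (p k) y \<longleftrightarrow> near j k" if "k < m" for k using hy that sym pV xyz by blast
      have hz': "E (p k) z" if "k < m" for k using ez that sym pV xyz by blast
      have ne: "p k \<noteq> x" "p k \<noteq> y" "p k \<noteq> z" if "k < m" for k using xP yP zP that by auto
      consider "j = 2" | "j = 3" "i = 1" | "j = 3" "i = 0" using ij by linarith
      then show False
      proof cases
        case 1
        show False
          by (rule claw[of "p 1" x y z]) (use xyz H n ij 1 m4 in \<open>auto simp: pV hx' hy' hz' near_def\<close>)
      next
        case 2
        show False
          by (rule claw[of "p 2" x y z]) (use xyz H n ij 2 m4 in \<open>auto simp: pV hx' hy' hz' near_def\<close>)
      next
        case 3
        show False
          by (rule bull[of "p 1" "p 2" z x y])
            (use xyz H n ij 3 m4 ez in \<open>auto simp: pV pE hx hy hx' hy' hz' near_def ne\<close>)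
      qed
    qed
    have "a \<in> I" "b \<in> I" "c \<in> I" using I_def by auto
    then show False using cl LL RR FF LRF abc by metis
  qed
qed

end


lemma walk_cons2: "walk V E (x # y # ys) \<Longrightarrow> walk V E (y # ys) \<and> E x y"
proof -
  assume w: "walk V E (x # y # ys)"
  have st: "\<And>i. Suc i < length (x # y # ys) \<Longrightarrow> E ((x # y # ys) ! i) ((x # y # ys) ! Suc i)"
    using w unfolding walk_def by blast
  have "E ((y # ys) ! i) ((y # ys) ! Suc i)" if "Suc i < length (y # ys)" for i
    using st[of "Suc i"] that by simp
  then show ?thesis using w st[of 0] unfolding walk_def by auto
qed

context mp begin

lemma typ5:
  assumes C: "connected_graph V E" and m5: "5 \<le> m" and v: "v \<in> V"
  shows "\<exists>i<m. tp v i"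
  using typed[OF C _ v] m5 by auto

lemma walk_idx:
  assumes C: "connected_graph V E" and m5: "5 \<le> m"
  shows "walk V E xs \<Longrightarrow> i < m \<Longrightarrow> tp (hd xs) i \<Longrightarrow> j < m \<Longrightarrow> tp (last xs) j \<Longrightarrow> j \<le> i + (length xs - 1)"
proof (induction xs arbitrary: i)
  case Nil
  then show ?case unfolding walk_def by simp
next
  case (Cons x ys)
  have m3: "3 \<le> m" using m5 by simp
  show ?case
  proof (cases ys)
    case Nil
    then show ?thesis using Cons.prems tp_uniq[OF m3, of x i j] by simp
  next
    case (Cons y zs)
    have w: "walk V E ys" "E x y" using walk_cons2[of V E x y zs] Cons.prems(1) Cons by auto
    have xV: "x \<in> V" and yV: "y \<in> V" using Cons.prems(1) Cons unfolding walk_def by auto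
    obtain i' where i': "i' < m" "tp y i'" using typ5[OF C m5 yV] by auto
    have "i' \<le> i + 1"
    proof (rule ccontr)
      assume "\<not> i' \<le> i + 1"
      then have "\<not> E x y" using far_type[OF m5 xV _ yV i'(2), of i] Cons.prems i' by simp
      then show False using w by simp
    qed
    moreover have "j \<le> i' + (length ys - 1)"
      using Cons.IH[OF w(1) i'(1)] i' Cons.prems Cons by simp
    ultimately show ?thesis using Cons by simp
  qed
qed

definition K :: "nat \<Rightarrow> 'a set" where "K i = {v \<in> V. tp v i}"

lemma expansion:
  assumes C: "connected_graph V E" and m5: "5 \<le> m"
  shows "expansion_of V E m path_E"
  unfolding expansion_of_def
proof (intro exI[of _ K] conjI allI impI ballI)
  have m3: "3 \<le> m" using m5 by simp
  show "K i \<noteq> {}" if "i < m" for i using tp_p[OF that] pV[OF that] unfolding K_def by auto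
  show "K i \<inter> K j = {}" if "i < m" "j < m" "i \<noteq> j" for i j
    using tp_uniq[OF m3] that unfolding K_def by auto
  show "(\<Union>i<m. K i) = V" using typ5[OF C m5] unfolding K_def by auto
  show "E x y" if "i < m" "x \<in> K i" "y \<in> K i" "x \<noteq> y" for i x y
    using same_type[OF m3] that unfolding K_def by auto
  show "E x y \<longleftrightarrow> path_E i j" if H: "i < m" "j < m" "i \<noteq> j" "x \<in> K i" "y \<in> K j" for i j x y
  proof -
    have x: "x \<in> V" "tp x i" and y: "y \<in> V" "tp y j" using H unfolding K_def by auto
    consider "j = Suc i" | "i = Suc j" | "i + 2 \<le> j" | "j + 2 \<le> i" using H(3) by linarith
    then show ?thesis
    proof cases
      case 1
      have "i + 3 < m \<or> 2 \<le> i" using m5 by linarith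
      then have "E x y" using adj_type[OF m3 x, of y] y H 1 by auto
      then show ?thesis using 1 by (simp add: path_E_def)
    next
      case 2
      have "j + 3 < m \<or> 2 \<le> j" using m5 by linarith
      then have "E y x" using adj_type[OF m3 y, of x] x H 2 by auto
      then show ?thesis using 2 sym x y by (auto simp add: path_E_def)
    next
      case 3
      then show ?thesis using far_type[OF m5 x y] H by (auto simp: path_E_def)
    next
      case 4
      then have "\<not> E y x" using far_type[OF m5 y x] H by auto
      then show ?thesis using 4 sym x y by (auto simp add: path_E_def)
    qed
  qed
qed

lemma diam4:
  assumes C: "connected_graph V E" and m5: "5 \<le> m"
  shows "4 \<le> diam V E"
proof -
  have m0: "0 < m" "m - 1 < m" using m5 by auto
  let ?Q = "\<lambda>n. \<exists>xs. walk V E xs \<and> hd xs = p 0 \<and> last xs = p (m-1) \<and> length xs = Suc n"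
  obtain xs where xs: "walk V E xs" "hd xs = p 0" "last xs = p (m-1)"
    using C pV m0 unfolding connected_graph_def by blast
  then have "?Q (length xs - 1)" using xs unfolding walk_def by (intro exI[of _ xs]) auto
  then have "?Q (LEAST n. ?Q n)" by (rule LeastI)
  then obtain ys where ys: "walk V E ys" "hd ys = p 0" "last ys = p (m-1)" "length ys = Suc (LEAST n. ?Q n)"
    by blast
  have "m - 1 \<le> 0 + (length ys - 1)"
    using walk_idx[OF C m5 ys(1), of 0 "m-1"] ys tp_p m0 by simp
  then have "m - 1 \<le> dist V E (p 0) (p (m-1))" using ys(4) unfolding dist_def by simp
  moreover have "dist V E (p 0) (p (m-1)) \<le> diam V E"
    unfolding diam_def
  proof (rule Max_ge)
    show "finite {dist V E u v |u v. u \<in> V \<and> v \<in> V}"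
      using finite_image_set2[of "\<lambda>u. u \<in> V" "\<lambda>v. v \<in> V" "dist V E"] finV by simp
    show "dist V E (p 0) (p (m-1)) \<in> {dist V E u v |u v. u \<in> V \<and> v \<in> V}"
      using pV m0 by blast
  qed
  ultimately show ?thesis using m5 by simp
qed

end


theorem lemma7:
  fixes V :: "'a set" and E :: "'a \<Rightarrow> 'a \<Rightarrow> bool"
  assumes "graph V E"
    and "connected_graph V E"
    and "claw_free V E" and "bull_free V E"
    and "longest_induced_cycle_le3 V E"
    and "independence_number V E \<ge> 3"
  shows "diam V E \<ge> 4 \<and> expansion_of_path V E"
proof -
  interpret gr V E using assms(1,3,4,5) by unfold_locales auto
  define CS where "CS = {card S | S. independent V E S}"
  have CSb: "CS \<subseteq> {..card V}"
    unfolding CS_def independent_def using card_mono[OF finV] by auto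
  then have CSfin: "finite CS" using finite_subset by blast
  have "card {} \<in> CS" unfolding CS_def independent_def by (intro CollectI exI[of _ "{}"]) auto
  then have "Max CS \<in> CS" using CSfin Max_in by blast
  then obtain S where S: "independent V E S" "card S = Max CS" unfolding CS_def by auto
  have "3 \<le> card S" using assms(6) S unfolding independence_number_def CS_def by simp
  then obtain T where T: "T \<subseteq> S" "card T = 3" using obtain_subset_with_card_n by metis
  then obtain a b c where abc0: "T = {a, b, c}" "a \<noteq> b" "b \<noteq> c" "a \<noteq> c"
    using card_3_iff by metis
  have SV: "S \<subseteq> V" and Sind: "\<forall>x\<in>S. \<forall>y\<in>S. \<not> E x y" using S(1) unfolding independent_def by auto
  have abc: "a \<in> V" "b \<in> V" "c \<in> V" "a \<noteq> b" "a \<noteq> c" "b \<noteq> c" "\<not> E a b" "\<not> E a c" "\<not> E b c"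
    using abc0 T SV Sind by auto
  define NS where "NS = {n. \<exists>q. ipath V E q n}"
  have NSb: "n \<le> card V" if nN: "n \<in> NS" for n
  proof -
    obtain q where q: "ipath V E q n" using nN NS_def by auto
    then have qs: "q ` {..<n} \<subseteq> V" "inj_on q {..<n}" unfolding ipath_def by auto
    have "card (q ` {..<n}) = n" using card_image[OF qs(2)] by simp
    moreover have "card (q ` {..<n}) \<le> card V" using card_mono[OF finV qs(1)] .
    ultimately show ?thesis by simp
  qed
  then have NSfin: "finite NS" using finite_nat_set_iff_bounded_le by blast
  have "0 \<in> NS" unfolding NS_def ipath_def by auto
  then have "Max NS \<in> NS" using NSfin Max_in by blast
  then obtain p where P: "ipath V E p (Max NS)" unfolding NS_def by auto
  interpret M: mp V E p "Max NS"
  proof unfold_locales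
    show "ipath V E p (Max NS)" by (rule P)
    show "n \<le> Max NS" if "ipath V E q n" for q n
      using that NSfin unfolding NS_def by (intro Max_ge) auto
  qed
  have "ipath V E (\<lambda>_. a) 1" unfolding ipath_def path_E_def inj_on_def using abc irr by auto
  then have m0: "0 < Max NS" using M.MAX by fastforce
  have m3: "3 \<le> Max NS" using M.m_ge3[OF assms(2) m0 abc] .
  have "\<not> (Max NS = 3 \<or> Max NS = 4)" using M.small[OF assms(2) _ abc] by blast
  then have m5: "5 \<le> Max NS" using m3 by auto
  show ?thesis
    using M.diam4[OF assms(2) m5] M.expansion[OF assms(2) m5] m5
    unfolding expansion_of_path_def by (intro conjI exI[of _ "Max NS"]) auto
qed

end
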